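(* If $H$ is a finite simple connected graph of order at least $3$, then the Cartesian product $K_2 \,\square\, H$ is not well-dominated.
   Context: A graph is well-dominated if every minimal (with respect to inclusion) dominating set is a minimum dominating set. The Cartesian product $G\,\square\, H$ has vertex set $V(G)\times V(H)$, with $(g_1,h_1)$ adjacent to $(g_2,h_2)$ iff either ($g_1=g_2$ and $h_1h_2\in E(H)$) or ($h_1=h_2$ and $g_1g_2\in E(G)$). *)

theory Defs
  imports Main
begin

definition simple_graph :: "'a set \<Rightarrow> ('a \<Rightarrow> 'a \<Rightarrow> bool) \<Rightarrow> bool" where
  "simple_graph V E \<longleftrightarrow>
     (\<forall>u v. E u v \<longrightarrow> u \<in> V \<and> v \<in> V) \<and>
     (\<forall>u v. E u v \<longrightarrow> E v u) \<and>
     (\<forall>v. \<not> E v v)"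

definition connected_graph :: "'a set \<Rightarrow> ('a \<Rightarrow> 'a \<Rightarrow> bool) \<Rightarrow> bool" where
  "connected_graph V E \<longleftrightarrow> V \<noteq> {} \<and>
     (\<forall>u\<in>V. \<forall>v\<in>V. (u, v) \<in> {(x, y). E x y}\<^sup>*)"

definition dominating_set :: "'a set \<Rightarrow> ('a \<Rightarrow> 'a \<Rightarrow> bool) \<Rightarrow> 'a set \<Rightarrow> bool" where
  "dominating_set V E D \<longleftrightarrow> D \<subseteq> V \<and> (\<forall>v\<in>V. v \<in> D \<or> (\<exists>u\<in>D. E u v))"

definition minimal_dominating_set :: "'a set \<Rightarrow> ('a \<Rightarrow> 'a \<Rightarrow> bool) \<Rightarrow> 'a set \<Rightarrow> bool" where
  "minimal_dominating_set V E D \<longleftrightarrow> dominating_set V E D \<and>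
     (\<forall>D'. D' \<subset> D \<longrightarrow> \<not> dominating_set V E D')"

definition minimum_dominating_set :: "'a set \<Rightarrow> ('a \<Rightarrow> 'a \<Rightarrow> bool) \<Rightarrow> 'a set \<Rightarrow> bool" where
  "minimum_dominating_set V E D \<longleftrightarrow> dominating_set V E D \<and>
     (\<forall>D'. dominating_set V E D' \<longrightarrow> card D \<le> card D')"

definition well_dominated :: "'a set \<Rightarrow> ('a \<Rightarrow> 'a \<Rightarrow> bool) \<Rightarrow> bool" where
  "well_dominated V E \<longleftrightarrow>
     (\<forall>D. minimal_dominating_set V E D \<longrightarrow> minimum_dominating_set V E D)"

definition cart_vertices :: "'a set \<Rightarrow> 'b set \<Rightarrow> ('a \<times> 'b) set" where
  "cart_vertices VG VH = VG \<times> VH"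

definition cart_edges ::
  "('a \<Rightarrow> 'a \<Rightarrow> bool) \<Rightarrow> ('b \<Rightarrow> 'b \<Rightarrow> bool) \<Rightarrow> ('a \<times> 'b) \<Rightarrow> ('a \<times> 'b) \<Rightarrow> bool" where
  "cart_edges EG EH = (\<lambda>(g1, h1) (g2, h2).
      (g1 = g2 \<and> EH h1 h2) \<or> (h1 = h2 \<and> EG g1 g2))"

definition K2_vertices :: "bool set" where
  "K2_vertices = UNIV"

definition K2_edges :: "bool \<Rightarrow> bool \<Rightarrow> bool" where
  "K2_edges a b \<longleftrightarrow> a \<noteq> b"

end

theory Submission
  imports Defs
begin

lemma deg2:
  fixes V :: "'a set" and E :: "'a \<Rightarrow> 'a \<Rightarrow> bool"
  assumes fin: "finite V" and sg: "simple_graph V E" and cg: "connected_graph V E"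
    and c3: "card V \<ge> 3"
  shows "\<exists>v u w. E v u \<and> E v w \<and> u \<noteq> w"
proof (rule ccontr)
  assume nd: "\<not> (\<exists>v u w. E v u \<and> E v w \<and> u \<noteq> w)"
  have sym: "\<And>x y. E x y \<Longrightarrow> E y x" using sg unfolding simple_graph_def by blast
  from cg obtain a where a: "a \<in> V" unfolding connected_graph_def by blast
  define S where "S = insert a {y. E a y}"
  have reach: "y \<in> S" if "(a, y) \<in> {(x, y). E x y}\<^sup>*" for y
    using that
  proof (induction rule: rtrancl_induct)
    case base then show ?case by (simp add: S_def)
  next
    case (step y z)
    then have "E y z" by simp
    show ?case
    proof (cases "y = a")
      case True then show ?thesis using \<open>E y z\<close> by (simp add: S_def)
    next
      case False
      with step.IH have "E a y" by (simp add: S_def)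
      then have "E y a" by (rule sym)
      with \<open>E y z\<close> nd have "z = a" by blast
      then show ?thesis by (simp add: S_def)
    qed
  qed
  have VS: "V \<subseteq> S" using cg a reach unfolding connected_graph_def by blast
  have "card S \<le> 2"
  proof (cases "\<exists>b. E a b")
    case True
    then obtain b where "E a b" by blast
    with nd have "S \<subseteq> {a, b}" by (auto simp: S_def)
    then have "card S \<le> card {a, b}" by (simp add: card_mono)
    also have "\<dots> \<le> 2" by (simp add: card_insert_le_m1)
    finally show ?thesis .
  next
    case False
    then have "S = {a}" by (auto simp: S_def)
    then show ?thesis by simp
  qed
  moreover have "finite S"
  proof -
    have "S \<subseteq> V" using sg a unfolding S_def simple_graph_def by blast
    then show ?thesis using fin finite_subset by blast
  qed
  ultimately have "card V \<le> 2" using VS card_mono by (metis le_trans)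
  with c3 show False by simp
qed

theorem proposition22:
  fixes V :: "'a set" and E :: "'a \<Rightarrow> 'a \<Rightarrow> bool"
  assumes "finite V"
    and "simple_graph V E"
    and "connected_graph V E"
    and "card V \<ge> 3"
  shows "\<not> well_dominated (cart_vertices K2_vertices V) (cart_edges K2_edges E)"
proof
  assume wd: "well_dominated (cart_vertices K2_vertices V) (cart_edges K2_edges E)"
  have sym: "\<And>x y. E x y \<Longrightarrow> E y x" and inV: "\<And>x y. E x y \<Longrightarrow> x \<in> V \<and> y \<in> V"
    using assms(2) unfolding simple_graph_def by blast+
  obtain v u w where vu: "E v u" and vw: "E v w" and uw: "u \<noteq> w"
    using deg2[OF assms] by blast
  have uv: "u \<noteq> v" and wv: "w \<noteq> v" using vu vw assms(2) unfolding simple_graph_def by blast+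
  define D1 where "D1 = {False} \<times> V"
  define D where "D = insert (True, v) (Pair False ` (V - {u, w}))"
  have dom1: "dominating_set (cart_vertices K2_vertices V) (cart_edges K2_edges E) D1"
    unfolding dominating_set_def D1_def cart_vertices_def K2_vertices_def
  proof (intro conjI ballI)
    fix p assume "p \<in> (UNIV::bool set) \<times> V"
    then obtain b x where p: "p = (b, x)" and x: "x \<in> V" by blast
    show "p \<in> {False} \<times> V \<or> (\<exists>q\<in>{False} \<times> V. cart_edges K2_edges E q p)"
    proof (cases b)
      case True
      then have "cart_edges K2_edges E (False, x) p" by (simp add: p cart_edges_def K2_edges_def)
      then show ?thesis using x by blast
    next
      case False then show ?thesis using p x by simp
    qed
  qed auto
  have min1: "minimal_dominating_set (cart_vertices K2_vertices V) (cart_edges K2_edges E) D1"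
    unfolding minimal_dominating_set_def
  proof (intro conjI allI impI dom1)
    fix D' assume D': "D' \<subset> D1"
    then obtain x where x: "x \<in> V" and nx: "(False, x) \<notin> D'" unfolding D1_def by blast
    show "\<not> dominating_set (cart_vertices K2_vertices V) (cart_edges K2_edges E) D'"
    proof
      assume "dominating_set (cart_vertices K2_vertices V) (cart_edges K2_edges E) D'"
      then have "(True, x) \<in> D' \<or> (\<exists>q\<in>D'. cart_edges K2_edges E q (True, x))"
        using x unfolding dominating_set_def cart_vertices_def K2_vertices_def by blast
      moreover have "(True, x) \<notin> D'" using D' unfolding D1_def by blast
      moreover have "\<not> (\<exists>q\<in>D'. cart_edges K2_edges E q (True, x))"
      proof
        assume "\<exists>q\<in>D'. cart_edges K2_edges E q (True, x)"
        then obtain b y where q: "(b, y) \<in> D'" and e: "cart_edges K2_edges E (b, y) (True, x)"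
          by auto
        have "b = False" using q D' unfolding D1_def by blast
        with e have "y = x" by (simp add: cart_edges_def K2_edges_def)
        with q nx \<open>b = False\<close> show False by simp
      qed
      ultimately show False by blast
    qed
  qed
  have domD: "dominating_set (cart_vertices K2_vertices V) (cart_edges K2_edges E) D"
    unfolding dominating_set_def cart_vertices_def K2_vertices_def
  proof (intro conjI ballI)
    show "D \<subseteq> UNIV \<times> V" using inV vu unfolding D_def by blast
  next
    fix p assume "p \<in> (UNIV::bool set) \<times> V"
    then obtain b x where p: "p = (b, x)" and x: "x \<in> V" by blast
    show "p \<in> D \<or> (\<exists>q\<in>D. cart_edges K2_edges E q p)"
    proof (cases "x = u \<or> x = w")
      case True
      show ?thesis
      proof (cases b)
        case True
        have "cart_edges K2_edges E (True, v) p" using \<open>x = u \<or> x = w\<close> vu vw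
          by (auto simp: p True cart_edges_def)
        then show ?thesis unfolding D_def by blast
      next
        case False
        have "(False, v) \<in> D" using inV vu uv wv unfolding D_def by blast
        moreover have "cart_edges K2_edges E (False, v) p" using \<open>x = u \<or> x = w\<close> vu vw
          by (auto simp: p False cart_edges_def)
        ultimately show ?thesis by blast
      qed
    next
      case False
      then have inD: "(False, x) \<in> D" using x unfolding D_def by blast
      show ?thesis
      proof (cases b)
        case True
        have "cart_edges K2_edges E (False, x) p" by (simp add: p True cart_edges_def K2_edges_def)
        then show ?thesis using inD by blast
      next
        case b: False
        show ?thesis using inD by (simp add: p b)
      qed
    qed
  qed
  have "minimum_dominating_set (cart_vertices K2_vertices V) (cart_edges K2_edges E) D1"
    using wd min1 unfolding well_dominated_def by blast
  then have le: "card D1 \<le> card D" using domD unfolding minimum_dominating_set_def by blast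
  have c1: "card D1 = card V" unfolding D1_def by (simp add: card_cartesian_product)
  have "u \<in> V" "w \<in> V" using inV vu vw by auto
  then have cd: "card (V - {u, w}) = card V - 2"
    using uw assms(1) by (simp add: card_Diff_subset)
  have "card D \<le> Suc (card (Pair False ` (V - {u, w})))"
    unfolding D_def by (simp add: card_insert_le_m1 card_insert_if)
  also have "\<dots> \<le> Suc (card (V - {u, w}))" by (simp add: card_image_le assms(1))
  finally have "card D \<le> Suc (card V - 2)" using cd by simp
  with le c1 assms(4) show False by simp
qed

end
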